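(* Let $R$ be a reflexive relation on $U$. For every $(A,B)\in\mathrm{DM(RS)}$, $(A,B)=\bigvee\{(\{a\}^{\vartriangle\blacktriangledown},\{a\}^{\vartriangle\blacktriangle})\mid a\in A\}\ \vee\ \bigvee\{(\{b\}^{\blacktriangledown},\{b\}^{\blacktriangle})\mid b\in B^{\triangledown}\}$, joins taken in $\mathrm{DM(RS)}$.
   Context: Let $U$ be a set and $R\subseteq U\times U$ a binary relation. For $x\in U$, $R(x)=\{y\in U\mid (x,y)\in R\}$ and $\breve R(x)=\{y\in U\mid (y,x)\in R\}$. For $X\subseteq U$: $X^{\blacktriangledown}=\{x\in U\mid R(x)\subseteq X\}$, $X^{\blacktriangle}=\{x\in U\mid R(x)\cap X\neq\emptyset\}$, $X^{\triangledown}=\{x\in U\mid \breve R(x)\subseteq X\}$, $X^{\vartriangle}=\{x\in U\mid \breve R(x)\cap X\neq\emptyset\}$; composites like $X^{\vartriangle\blacktriangledown}$ mean $(X^{\vartriangle})^{\blacktriangledown}$. $\wp(U)^{\blacktriangledown}=\{X^{\blacktriangledown}\mid X\subseteq U\}$, $\wp(U)^{\blacktriangle}=\{X^{\blacktriangle}\mid X\subseteq U\}$. $\mathcal S=\{x\in U\mid |R(x)|=1\}$. $\mathrm{RS}=\{(X^{\blacktriangledown},X^{\blacktriangle})\mid X\subseteq U\}$ ordered coordinatewise; $\mathrm{DM(RS)}$ is its Dedekind–MacNeille completion, identified with $\{(A,B)\in\wp(U)^{\blacktriangledown}\times\wp(U)^{\blacktriangle}\mid A^{\vartriangle\blacktriangle}\subseteq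 B,\ A\cap\mathcal S=B\cap\mathcal S\}$ ordered coordinatewise, with meets $\bigwedge_i(X_i,Y_i)=(\bigcap_iX_i,(\bigcap_iY_i)^{\triangledown\blacktriangle})$ and joins $\bigvee_i(X_i,Y_i)=((\bigcup_iX_i)^{\vartriangle\blacktriangledown},\bigcup_iY_i)$. *)

theory Defs
  imports Main
begin

text \<open>The universe U is the type 'a (U = UNIV); R :: ('a \<times> 'a) set.\<close>

definition Rimg :: "('a \<times> 'a) set \<Rightarrow> 'a \<Rightarrow> 'a set" where
  "Rimg R x = {y. (x, y) \<in> R}"

definition Rinv :: "('a \<times> 'a) set \<Rightarrow> 'a \<Rightarrow> 'a set" where
  "Rinv R x = {y. (y, x) \<in> R}"

definition lowB :: "('a \<times> 'a) set \<Rightarrow> 'a set \<Rightarrow> 'a set" where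
  "lowB R X = {x. Rimg R x \<subseteq> X}"

definition uppB :: "('a \<times> 'a) set \<Rightarrow> 'a set \<Rightarrow> 'a set" where
  "uppB R X = {x. Rimg R x \<inter> X \<noteq> {}}"

definition lowW :: "('a \<times> 'a) set \<Rightarrow> 'a set \<Rightarrow> 'a set" where
  "lowW R X = {x. Rinv R x \<subseteq> X}"

definition uppW :: "('a \<times> 'a) set \<Rightarrow> 'a set \<Rightarrow> 'a set" where
  "uppW R X = {x. Rinv R x \<inter> X \<noteq> {}}"

definition singR :: "('a \<times> 'a) set \<Rightarrow> 'a set" where
  "singR R = {x. \<exists>y. Rimg R x = {y}}"

text \<open>DM(RS), in its concrete identification\<close>
definition DM :: "('a \<times> 'a) set \<Rightarrow> ('a set \<times> 'a set) set" where
  "DM R = {(A, B). A \<in> range (lowB R) \<and> B \<in> range (uppB R)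
             \<and> uppB R (uppW R A) \<subseteq> B \<and> A \<inter> singR R = B \<inter> singR R}"

definition dmJoin :: "('a \<times> 'a) set \<Rightarrow> ('a set \<times> 'a set) set \<Rightarrow> 'a set \<times> 'a set" where
  "dmJoin R F = (lowB R (uppW R (\<Union> (fst ` F))), \<Union> (snd ` F))"

definition dmJoin2 :: "('a \<times> 'a) set \<Rightarrow> 'a set \<times> 'a set \<Rightarrow> 'a set \<times> 'a set \<Rightarrow> 'a set \<times> 'a set" where
  "dmJoin2 R p q = dmJoin R {p, q}"

end

theory Submission
  imports Defs
begin

lemma gal_mono: "X \<subseteq> Y \<Longrightarrow> lowB R (uppW R X) \<subseteq> lowB R (uppW R Y)"
  unfolding lowB_def uppW_def by blast

lemma gal_closed: "lowB R (uppW R (lowB R Z)) \<subseteq> lowB R Z"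
  unfolding lowB_def uppW_def Rimg_def Rinv_def by blast

lemma gal_ext: "refl R \<Longrightarrow> X \<subseteq> lowB R (uppW R X)"
  unfolding lowB_def uppW_def Rimg_def Rinv_def refl_on_def by blast

theorem mainTheorem14:
  fixes R :: "('a \<times> 'a) set" and A B :: "'a set"
  assumes "refl R"
    and "(A, B) \<in> DM R"
  shows "(A, B) = dmJoin2 R
           (dmJoin R {(lowB R (uppW R {a}), uppB R (uppW R {a})) | a. a \<in> A})
           (dmJoin R {(lowB R {b}, uppB R {b}) | b. b \<in> lowW R B})"
proof -
  have rf: "\<And>x. (x,x) \<in> R" using assms(1) by (simp add: refl_on_def)
  from assms(2) obtain Z Y where AZ: "A = lowB R Z" and BY: "B = uppB R Y"
    and sub: "uppB R (uppW R A) \<subseteq> B" and S: "A \<inter> singR R = B \<inter> singR R"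
    unfolding DM_def by auto
  have clA: "lowB R (uppW R A) = A"
    using gal_closed[of R Z] gal_ext[OF assms(1), of A] AZ by auto
  define U1 where "U1 = (\<Union>a\<in>A. lowB R (uppW R {a}))"
  define U2 where "U2 = (\<Union>b\<in>lowW R B. lowB R {b})"
  define C where "C = lowB R (uppW R U1) \<union> lowB R (uppW R U2)"
  have U1A: "U1 \<subseteq> A"
  proof -
    have "U1 \<subseteq> lowB R (uppW R A)" unfolding U1_def using gal_mono[of _ A R] by blast
    thus ?thesis using clA by simp
  qed
  have AU1: "A \<subseteq> U1"
    unfolding U1_def using rf by (auto simp: lowB_def uppW_def Rimg_def Rinv_def)
  have U2A: "U2 \<subseteq> A"
  proof
    fix x assume "x \<in> U2"
    then obtain b where b: "b \<in> lowW R B" "Rimg R x \<subseteq> {b}"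
      unfolding U2_def lowB_def by auto
    have xb: "Rimg R x = {b}" using b(2) rf[of x] by (auto simp: Rimg_def)
    hence "x = b" using rf[of x] by (auto simp: Rimg_def)
    hence "x \<in> B" using b(1) rf[of x] by (auto simp: lowW_def Rinv_def)
    moreover have "x \<in> singR R" using xb by (auto simp: singR_def)
    ultimately show "x \<in> A" using S by blast
  qed
  have CA: "C \<subseteq> A" unfolding C_def
    using gal_mono[OF U1A, of R] gal_mono[OF U2A, of R] clA by auto
  have AC: "A \<subseteq> C" unfolding C_def
    using AU1 gal_ext[OF assms(1), of U1] by auto
  have fstEq: "lowB R (uppW R C) = A"
    using gal_mono[OF CA, of R] clA gal_ext[OF assms(1), of C] AC by auto
  define V1 where "V1 = (\<Union>a\<in>A. uppB R (uppW R {a}))"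
  define V2 where "V2 = (\<Union>b\<in>lowW R B. uppB R {b})"
  have V1B: "V1 \<subseteq> B"
  proof -
    have "V1 \<subseteq> uppB R (uppW R A)" unfolding V1_def uppB_def uppW_def by blast
    thus ?thesis using sub by simp
  qed
  have V2B: "V2 \<subseteq> B"
    unfolding V2_def by (auto simp: uppB_def lowW_def Rimg_def Rinv_def)
  have BV2: "B \<subseteq> V2"
  proof
    fix x assume "x \<in> B"
    then obtain y where y: "y \<in> Y" "(x,y) \<in> R" using BY by (auto simp: uppB_def Rimg_def)
    have "y \<in> lowW R B" using y(1) BY by (auto simp: lowW_def uppB_def Rimg_def Rinv_def)
    moreover have "x \<in> uppB R {y}" using y(2) by (auto simp: uppB_def Rimg_def)
    ultimately show "x \<in> V2" unfolding V2_def by blast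
  qed
  have e1: "dmJoin R {(lowB R (uppW R {a}), uppB R (uppW R {a})) | a. a \<in> A}
          = (lowB R (uppW R U1), V1)"
  proof -
    have "fst ` {(lowB R (uppW R {a}), uppB R (uppW R {a})) | a. a \<in> A} = (\<lambda>a. lowB R (uppW R {a})) ` A"
      by force
    moreover have "snd ` {(lowB R (uppW R {a}), uppB R (uppW R {a})) | a. a \<in> A} = (\<lambda>a. uppB R (uppW R {a})) ` A"
      by force
    ultimately show ?thesis unfolding dmJoin_def U1_def V1_def by simp
  qed
  have e2: "dmJoin R {(lowB R {b}, uppB R {b}) | b. b \<in> lowW R B}
          = (lowB R (uppW R U2), V2)"
  proof -
    have "fst ` {(lowB R {b}, uppB R {b}) | b. b \<in> lowW R B} = (\<lambda>b. lowB R {b}) ` lowW R B"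
      by force
    moreover have "snd ` {(lowB R {b}, uppB R {b}) | b. b \<in> lowW R B} = (\<lambda>b. uppB R {b}) ` lowW R B"
      by force
    ultimately show ?thesis unfolding dmJoin_def U2_def V2_def by simp
  qed
  have "V1 \<union> V2 = B" using V1B V2B BV2 by blast
  moreover have "lowB R (uppW R (lowB R (uppW R U1) \<union> lowB R (uppW R U2))) = A"
    using fstEq unfolding C_def .
  ultimately show ?thesis unfolding dmJoin2_def e1 e2 by (simp add: dmJoin_def)
qed

end
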